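(* $\mathcal{L}_{\mathsf{SAFA}}\subsetneq\mathcal{L}_{\mathsf{CCA}}$: every data language accepted by a SAFA is accepted by some class counting automaton, and some data language accepted by a class counting automaton is accepted by no SAFA.
   Context: $D$ is a fixed countably infinite set of data values; for a finite alphabet $\Sigma$, data languages are subsets of $(\Sigma\times D)^*$. A set augmented finite automaton (SAFA) is a tuple $M=(Q,\Sigma\times D,q_0,F,H,\delta)$: $Q$ finite set of states, $q_0\in Q$ initial, $F\subseteq Q$ final, $H=\{h_1,\dots,h_m\}$ a finite collection of (names of) sets of data values, $\delta\subseteq Q\times\Sigma\times C\times OP\times Q$ with $C=\{p(h_i),\,!p(h_i)\}$, $OP=\{-\}\cup\{\mathsf{ins}(h_i)\}$. Configurations are $(q,\langle S_1,\dots,S_m\rangle)$, $S_i\subseteq D$ finite; initially state $q_0$ and all sets empty. On reading $(a,d)$, a transition $(q,a,\alpha,op,q')$ from the current state may be taken if $\alpha=p(h_i)$ and $d\in S_i$, or $\alpha=\,!p(h_i)$ and $d\notin S_i$; then the state becomes $q'$ and if $op=\mathsf{ins}(h_j)$, $d$ is added to $S_j$. A word is accepted if some run reads it entirely and ends in $F$; $\mathcal{L}_{\mathsf{SAFA}}$ is the class of languages accepted by SAFA. A class counting automaton (CCA) is a tuple $(Q,\Sigma,\delta,q_0,F)$ with finite state set $Q$, initial state $q_0$, final states $F$, and $\delta\subseteq Q\times\Sigma\times C\times\mathit{Inst}\times\mathbb{N}\times Q$, where a constraint in $C$ is a pair $(\mathsf{op},e)$ with $\mathsf{op}\in\{<,>,=,\leq,\geq,\neq\}$,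 $e\in\mathbb{N}$, and $\mathit{Inst}=\{\uparrow^+,\downarrow\}$. The automaton maintains a bag $\beta:D\to\mathbb{N}$, initially $\beta(d)=0$ for all $d$. On reading $(a,d)$ in state $q$ it may take a transition $(q,a,(\mathsf{op},e),\mathit{ins},m,q')$ provided $\beta(d)\ \mathsf{op}\ e$ holds; then $\beta(d)$ is increased by $m$ if $\mathit{ins}=\uparrow^+$, or reset to $m$ if $\mathit{ins}=\downarrow$, and the state becomes $q'$. A word is accepted if some run reads it entirely and ends in $F$. $\mathcal{L}_{\mathsf{CCA}}$ is the class of languages accepted by CCA. *)

theory Defs
  imports Main
begin

text \<open>Data values: the fixed countably infinite set D is represented by the type nat.\<close>
type_synonym data = nat

text \<open>Sets h_1..h_m are indexed by 0..m-1.\<close>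
datatype safa_cond = Pin nat | NotPin nat
datatype safa_op = NoOp | Ins nat

record ('q, 'a) safa =
  sQ :: "'q set"
  sSigma :: "'a set"
  sq0 :: 'q
  sF :: "'q set"
  sm :: nat
  sdelta :: "('q \<times> 'a \<times> safa_cond \<times> safa_op \<times> 'q) set"

definition cond_ok :: "nat \<Rightarrow> safa_cond \<Rightarrow> bool" where
  "cond_ok m c = (case c of Pin i \<Rightarrow> i < m | NotPin i \<Rightarrow> i < m)"

definition op_ok :: "nat \<Rightarrow> safa_op \<Rightarrow> bool" where
  "op_ok m o' = (case o' of NoOp \<Rightarrow> True | Ins j \<Rightarrow> j < m)"

definition safa_wf :: "('q, 'a) safa \<Rightarrow> bool" where
  "safa_wf M \<longleftrightarrow> finite (sQ M) \<and> finite (sSigma M) \<and> sq0 M \<in> sQ M \<and> sF M \<subseteq> sQ M \<and>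
     (\<forall>(q, a, c, o', q') \<in> sdelta M. q \<in> sQ M \<and> a \<in> sSigma M \<and> cond_ok (sm M) c
        \<and> op_ok (sm M) o' \<and> q' \<in> sQ M)"

fun safa_holds :: "safa_cond \<Rightarrow> (nat \<Rightarrow> data set) \<Rightarrow> data \<Rightarrow> bool" where
  "safa_holds (Pin i) S d = (d \<in> S i)"
| "safa_holds (NotPin i) S d = (d \<notin> S i)"

fun safa_apply :: "safa_op \<Rightarrow> data \<Rightarrow> (nat \<Rightarrow> data set) \<Rightarrow> (nat \<Rightarrow> data set)" where
  "safa_apply NoOp d S = S"
| "safa_apply (Ins j) d S = S(j := insert d (S j))"

inductive safa_run :: "('q, 'a) safa \<Rightarrow> 'q \<times> (nat \<Rightarrow> data set) \<Rightarrow> ('a \<times> data) list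
    \<Rightarrow> 'q \<times> (nat \<Rightarrow> data set) \<Rightarrow> bool" for M where
  safa_nil: "safa_run M c [] c"
| safa_step: "(q, a, c, o', q') \<in> sdelta M \<Longrightarrow> safa_holds c S d \<Longrightarrow>
     safa_run M (q', safa_apply o' d S) w cf \<Longrightarrow> safa_run M (q, S) ((a, d) # w) cf"

definition safa_lang :: "('q, 'a) safa \<Rightarrow> ('a \<times> data) list set" where
  "safa_lang M = {w. \<exists>q S. safa_run M (sq0 M, \<lambda>_. {}) w (q, S) \<and> q \<in> sF M}"

datatype cca_rel = RLt | RGt | REq | RLe | RGe | RNe
datatype cca_inst = IncBy | ResetTo

fun cca_holds :: "cca_rel \<Rightarrow> nat \<Rightarrow> nat \<Rightarrow> bool" where
  "cca_holds RLt x e = (x < e)"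
| "cca_holds RGt x e = (x > e)"
| "cca_holds REq x e = (x = e)"
| "cca_holds RLe x e = (x \<le> e)"
| "cca_holds RGe x e = (x \<ge> e)"
| "cca_holds RNe x e = (x \<noteq> e)"

fun cca_apply :: "cca_inst \<Rightarrow> nat \<Rightarrow> nat \<Rightarrow> nat" where
  "cca_apply IncBy m x = x + m"
| "cca_apply ResetTo m x = m"

record ('q, 'a) cca =
  cQ :: "'q set"
  cSigma :: "'a set"
  cdelta :: "('q \<times> 'a \<times> (cca_rel \<times> nat) \<times> cca_inst \<times> nat \<times> 'q) set"
  cq0 :: 'q
  cF :: "'q set"

definition cca_wf :: "('q, 'a) cca \<Rightarrow> bool" where
  "cca_wf C \<longleftrightarrow> finite (cQ C) \<and> finite (cSigma C) \<and> finite (cdelta C) \<and> cq0 C \<in> cQ C \<and>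
     cF C \<subseteq> cQ C \<and>
     (\<forall>(q, a, ce, ins, m, q') \<in> cdelta C. q \<in> cQ C \<and> a \<in> cSigma C \<and> q' \<in> cQ C)"

inductive cca_run :: "('q, 'a) cca \<Rightarrow> 'q \<times> (data \<Rightarrow> nat) \<Rightarrow> ('a \<times> data) list
    \<Rightarrow> 'q \<times> (data \<Rightarrow> nat) \<Rightarrow> bool" for C where
  cca_nil: "cca_run C c [] c"
| cca_step: "(q, a, (r, e), ins, m, q') \<in> cdelta C \<Longrightarrow> cca_holds r (\<beta> d) e \<Longrightarrow>
     cca_run C (q', \<beta>(d := cca_apply ins m (\<beta> d))) w cf \<Longrightarrow> cca_run C (q, \<beta>) ((a, d) # w) cf"

definition cca_lang :: "('q, 'a) cca \<Rightarrow> ('a \<times> data) list set" where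
  "cca_lang C = {w. \<exists>q \<beta>. cca_run C (cq0 C, \<lambda>_. 0) w (q, \<beta>) \<and> q \<in> cF C}"

end

theory Submission imports Defs begin

lemma safa_run_trans:
  "safa_run M c u c'' \<Longrightarrow> safa_run M c'' v c' \<Longrightarrow> safa_run M c (u@v) c'"
  by (induction rule: safa_run.induct) (auto intro: safa_step)

lemma safa_run_nil_iff: "safa_run M c [] c' \<longleftrightarrow> c' = c"
  by (auto elim: safa_run.cases intro: safa_nil)

inductive_cases safa_consE: "safa_run M (q,S) ((a,d)#w) cf"

lemma safa_run_cons_iff:
  "safa_run M (q,S) ((a,d)#w) cf \<longleftrightarrow>
   (\<exists>c oo q'. (q,a,c,oo,q') \<in> sdelta M \<and> safa_holds c S d \<and> safa_run M (q', safa_apply oo d S) w cf)"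
  apply (rule iffI)
   apply (erule safa_consE) apply blast
  apply (blast intro: safa_step)
  done

lemma safa_run_appendD:
  "safa_run M c (u@v) c' \<Longrightarrow> \<exists>c''. safa_run M c u c'' \<and> safa_run M c'' v c'"
proof (induction u arbitrary: c)
  case Nil then show ?case by (intro exI[of _ c]) (auto intro: safa_nil)
next
  case (Cons x u)
  obtain q S where c: "c = (q,S)" by (cases c)
  obtain a d where x: "x = (a,d)" by (cases x)
  from Cons.prems obtain cc oo q' where t: "(q,a,cc,oo,q') \<in> sdelta M" "safa_holds cc S d"
     "safa_run M (q', safa_apply oo d S) (u@v) c'" unfolding c x by (auto simp: safa_run_cons_iff)
  from Cons.IH[OF t(3)] obtain c'' where "safa_run M (q', safa_apply oo d S) u c''" "safa_run M c'' v c'" by blast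
  moreover have "safa_run M (q,S) ((a,d)#u) c''" if "safa_run M (q', safa_apply oo d S) u c''" for c''
    using t that by (auto intro: safa_step)
  ultimately show ?case unfolding c x by blast
qed

lemma safa_apply_mono: "S i \<subseteq> safa_apply oo d S i"
  by (cases oo) auto

lemma safa_run_mono: "safa_run M c w c' \<Longrightarrow> snd c i \<subseteq> snd c' i"
  by (induction rule: safa_run.induct) (use safa_apply_mono in fastforce)+

lemma wf_trans: "safa_wf M \<Longrightarrow> (q,a,c,oo,q') \<in> sdelta M \<Longrightarrow>
  q \<in> sQ M \<and> a \<in> sSigma M \<and> cond_ok (sm M) c \<and> op_ok (sm M) oo \<and> q' \<in> sQ M"
  unfolding safa_wf_def by fastforce

definition prof :: "nat \<Rightarrow> (nat \<Rightarrow> data set) \<Rightarrow> data \<Rightarrow> nat set" where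
  "prof m S d = {i. i < m \<and> d \<in> S i}"

fun holdsT :: "safa_cond \<Rightarrow> nat set \<Rightarrow> bool" where
  "holdsT (Pin i) T = (i \<in> T)"
| "holdsT (NotPin i) T = (i \<notin> T)"

fun applyT :: "safa_op \<Rightarrow> nat set \<Rightarrow> nat set" where
  "applyT NoOp T = T"
| "applyT (Ins j) T = insert j T"

lemma holds_prof: "cond_ok m c \<Longrightarrow> safa_holds c S d = holdsT c (prof m S d)"
  by (cases c) (auto simp: cond_ok_def prof_def)

lemma apply_prof: "op_ok m oo \<Longrightarrow>
  prof m (safa_apply oo d S) e = (if e = d then applyT oo (prof m S d) else prof m S e)"
  by (cases oo) (auto simp: prof_def op_ok_def)

lemma applyT_sub: "op_ok m oo \<Longrightarrow> T \<subseteq> {..<m} \<Longrightarrow> applyT oo T \<subseteq> {..<m}"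
  by (cases oo) (auto simp: op_ok_def)

definition simC :: "('q,'a) safa \<Rightarrow> ('q \<Rightarrow> nat) \<Rightarrow> (nat set \<Rightarrow> nat) \<Rightarrow> (nat,'a) cca" where
  "simC M f g = \<lparr>cQ = f ` sQ M, cSigma = sSigma M,
     cdelta = {(f q, a, (REq, g T), ResetTo, g (applyT oo T), f q') | q a c oo q' T.
        (q,a,c,oo,q') \<in> sdelta M \<and> T \<subseteq> {..<sm M} \<and> holdsT c T},
     cq0 = f (sq0 M), cF = f ` sF M\<rparr>"

lemma sim_fwd:
  assumes wf: "safa_wf M"
  shows "safa_run M c w c' \<Longrightarrow>
    cca_run (simC M f g) (f (fst c), \<lambda>d. g (prof (sm M) (snd c) d)) w (f (fst c'), \<lambda>d. g (prof (sm M) (snd c') d))"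
proof (induction rule: safa_run.induct)
  case (safa_nil c) then show ?case by (rule cca_nil)
next
  case (safa_step q a cc oo q' S d w cf)
  let ?m = "sm M"
  let ?T = "prof ?m S d"
  have ok: "cond_ok ?m cc" "op_ok ?m oo" using wf_trans[OF wf safa_step(1)] by auto
  have tr: "(f q, a, (REq, g ?T), ResetTo, g (applyT oo ?T), f q') \<in> cdelta (simC M f g)"
  proof -
    have "holdsT cc ?T" "?T \<subseteq> {..<?m}" using safa_step(2) holds_prof[OF ok(1)] by (auto simp: prof_def)
    then show ?thesis unfolding simC_def using safa_step(1) by simp blast
  qed
  have eq: "(\<lambda>e. g (prof ?m S e))(d := cca_apply ResetTo (g (applyT oo ?T)) ((\<lambda>e. g (prof ?m S e)) d))
      = (\<lambda>e. g (prof ?m (safa_apply oo d S) e))"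
    using apply_prof[OF ok(2)] by (auto simp: fun_eq_iff)
  show ?case
    apply simp
    apply (rule cca_step[OF tr])
     apply simp
    using safa_step(4) eq by simp
qed

lemma sim_bwd:
  assumes wf: "safa_wf M" and f: "inj_on f (sQ M)" and g: "inj_on g (Pow {..<sm M})"
  shows "cca_run (simC M f g) c w c' \<Longrightarrow> \<forall>q S. fst c = f q \<longrightarrow> q \<in> sQ M \<longrightarrow> snd c = (\<lambda>d. g (prof (sm M) S d)) \<longrightarrow>
     (\<exists>q' S'. safa_run M (q,S) w (q',S') \<and> fst c' = f q' \<and> q' \<in> sQ M)"
proof (induction rule: cca_run.induct)
  case (cca_nil c) then show ?case by (auto intro: safa_nil)
next
  case (cca_step p a r e ins mm p1 \<beta> d w cf)
  let ?m = "sm M"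
  show ?case
  proof (intro allI impI)
    fix q S assume h: "fst (p, \<beta>) = f q" "q \<in> sQ M" "snd (p, \<beta>) = (\<lambda>d. g (prof ?m S d))"
    from cca_step(1) obtain q0 cc oo q1 T where t: "p = f q0" "r = REq" "e = g T" "ins = ResetTo"
      "mm = g (applyT oo T)" "p1 = f q1" "(q0,a,cc,oo,q1) \<in> sdelta M" "T \<subseteq> {..<?m}" "holdsT cc T"
      unfolding simC_def by auto
    have w: "q0 \<in> sQ M" "cond_ok ?m cc" "op_ok ?m oo" "q1 \<in> sQ M" using wf_trans[OF wf t(7)] by auto
    have "q0 = q" using f h t(1) w(1) by (auto dest: inj_onD)
    have "g (prof ?m S d) = g T" using cca_step(2) h t by simp
    then have T: "T = prof ?m S d" using g t(8) by (auto dest!: inj_onD simp: prof_def)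
    have hold: "safa_holds cc S d" using holds_prof[OF w(2)] t(9) T by simp
    have eq: "\<beta>(d := cca_apply ins mm (\<beta> d)) = (\<lambda>e. g (prof ?m (safa_apply oo d S) e))"
      using apply_prof[OF w(3)] h t T by (auto simp: fun_eq_iff)
    from cca_step.IH[rule_format, of q1 "safa_apply oo d S"] eq t(6) w(4)
    obtain q' S' where "safa_run M (q1, safa_apply oo d S) w (q', S')" "fst cf = f q'" "q' \<in> sQ M" by auto
    then show "\<exists>q' S'. safa_run M (q, S) ((a, d) # w) (q', S') \<and> fst cf = f q' \<and> q' \<in> sQ M"
      using t(7) hold \<open>q0 = q\<close> by (auto intro: safa_step)
  qed
qed

lemma finite_sdelta:
  assumes wf: "safa_wf M" shows "finite (sdelta M)"
proof -
  let ?m = "sm M"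
  have "sdelta M \<subseteq> sQ M \<times> sSigma M \<times> (Pin ` {..<?m} \<union> NotPin ` {..<?m}) \<times> (insert NoOp (Ins ` {..<?m})) \<times> sQ M"
  proof
    fix t assume "t \<in> sdelta M"
    then obtain q a c oo q' where t: "t = (q,a,c,oo,q')" "(q,a,c,oo,q') \<in> sdelta M" by (cases t) auto
    from wf_trans[OF wf t(2)] show "t \<in> sQ M \<times> sSigma M \<times> (Pin ` {..<?m} \<union> NotPin ` {..<?m}) \<times> (insert NoOp (Ins ` {..<?m})) \<times> sQ M" unfolding t(1)
      by (cases c; cases oo) (auto simp: cond_ok_def op_ok_def)
  qed
  moreover have "finite (sQ M)" "finite (sSigma M)" using wf by (auto simp: safa_wf_def)
  ultimately show ?thesis by (auto intro: finite_subset)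
qed

lemma part1:
  fixes M :: "('q,'a) safa"
  assumes wf: "safa_wf M"
  shows "\<exists>C :: (nat,'a) cca. cca_wf C \<and> cca_lang C = safa_lang M"
proof -
  let ?m = "sm M"
  have fQ: "finite (sQ M)" using wf by (auto simp: safa_wf_def)
  obtain f :: "'q \<Rightarrow> nat" where f: "inj_on f (sQ M)" using finite_imp_inj_to_nat_seg[OF fQ] by blast
  obtain h :: "nat set \<Rightarrow> nat" where h: "inj_on h (Pow {..<?m})"
    using finite_imp_inj_to_nat_seg[of "Pow {..<?m}"] by auto
  define g where "g T = (if T = {} then 0 else Suc (h T))" for T
  have g: "inj_on g (Pow {..<?m})" using h unfolding g_def inj_on_def by auto
  have g0: "g {} = 0" by (simp add: g_def)
  define C where "C = simC M f g"
  have fin: "finite (cdelta C)"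
  proof -
    define F :: "(('q \<times> 'a \<times> safa_cond \<times> safa_op \<times> 'q) \<times> nat set) \<Rightarrow> _" where "F = (\<lambda>((q,a,c,oo,q'),T). (f q, a, (REq, g T), ResetTo, g (applyT oo T), f q'))"
    have "cdelta C \<subseteq> F ` (sdelta M \<times> Pow {..<?m})"
    proof
      fix x assume "x \<in> cdelta C"
      then obtain q a c oo q' T where x: "x = (f q, a, (REq, g T), ResetTo, g (applyT oo T), f q')"
        "(q,a,c,oo,q') \<in> sdelta M" "T \<subseteq> {..<?m}" unfolding C_def simC_def by auto
      then show "x \<in> F ` (sdelta M \<times> Pow {..<?m})"
        by (intro rev_image_eqI[of "((q,a,c,oo,q'),T)"]) (auto simp: F_def)
    qed
    then show ?thesis using finite_sdelta[OF wf] by (auto intro: finite_subset)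
  qed
  have "cca_wf C" unfolding cca_wf_def
  proof (intro conjI)
    show "finite (cQ C)" "finite (cSigma C)" "cq0 C \<in> cQ C" "cF C \<subseteq> cQ C"
      using wf unfolding C_def simC_def safa_wf_def by auto
    show "finite (cdelta C)" by (rule fin)
    show "\<forall>(q, a, ce, ins, m, q')\<in>cdelta C. q \<in> cQ C \<and> a \<in> cSigma C \<and> q' \<in> cQ C"
    proof (clarify)
      fix p a r e ins mm p'
      assume "(p, a, (r,e), ins, mm, p') \<in> cdelta C"
      then obtain q c oo q' T where x: "p = f q" "p' = f q'"
        "(q,a,c,oo,q') \<in> sdelta M" unfolding C_def simC_def by auto
      from wf_trans[OF wf x(3)] x show "p \<in> cQ C \<and> a \<in> cSigma C \<and> p' \<in> cQ C"
        unfolding C_def simC_def by auto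
    qed
  qed
  moreover have "cca_lang C = safa_lang M"
  proof
    show "cca_lang C \<subseteq> safa_lang M"
    proof
      fix w assume "w \<in> cca_lang C"
      then obtain p \<beta> where r: "cca_run C (cq0 C, \<lambda>_. 0) w (p,\<beta>)" "p \<in> cF C" by (auto simp: cca_lang_def)
      have e: "(\<lambda>_. 0::nat) = (\<lambda>d. g (prof ?m (\<lambda>_. {}) d))" by (simp add: prof_def g0)
      have q0: "sq0 M \<in> sQ M" using wf by (simp add: safa_wf_def)
      from sim_bwd[OF wf f g, OF r(1)[unfolded C_def], rule_format, of "sq0 M" "\<lambda>_. {}"] e q0
      obtain q' S' where s: "safa_run M (sq0 M, \<lambda>_. {}) w (q', S')" "p = f q'" "q' \<in> sQ M"
        by (auto simp: simC_def)
      from r(2) obtain s0 where "s0 \<in> sF M" "p = f s0" by (auto simp: C_def simC_def)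
      moreover have "sF M \<subseteq> sQ M" using wf by (simp add: safa_wf_def)
      ultimately have "q' \<in> sF M" using s f by (metis inj_onD subsetD)
      then show "w \<in> safa_lang M" using s by (auto simp: safa_lang_def)
    qed
  next
    show "safa_lang M \<subseteq> cca_lang C"
    proof
      fix w assume "w \<in> safa_lang M"
      then obtain q S where r: "safa_run M (sq0 M, \<lambda>_. {}) w (q, S)" "q \<in> sF M" by (auto simp: safa_lang_def)
      have e: "(\<lambda>d. g (prof ?m (\<lambda>_. {}) d)) = (\<lambda>_. 0::nat)" by (simp add: prof_def g0)
      from sim_fwd[OF wf r(1), of f g] e show "w \<in> cca_lang C"
        unfolding cca_lang_def C_def using r(2) by (auto simp: simC_def)
    qed
  qed
  ultimately show ?thesis by blast
qed


definition stepc :: "(data \<Rightarrow> nat) \<Rightarrow> nat \<times> data \<Rightarrow> (data \<Rightarrow> nat) option" where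
  "stepc \<beta> x = (if fst x = 0 \<and> \<beta> (snd x) = 0 then Some (\<beta>(snd x := 1))
     else if fst x = 1 \<and> \<beta> (snd x) = 1 then Some (\<beta>(snd x := 0)) else None)"

fun exec :: "(data \<Rightarrow> nat) \<Rightarrow> (nat \<times> data) list \<Rightarrow> (data \<Rightarrow> nat) option" where
  "exec \<beta> [] = Some \<beta>"
| "exec \<beta> (x # w) = Option.bind (stepc \<beta> x) (\<lambda>\<beta>'. exec \<beta>' w)"

lemma exec_append: "exec \<beta> (u @ v) = Option.bind (exec \<beta> u) (\<lambda>\<beta>'. exec \<beta>' v)"
  by (induction u arbitrary: \<beta>) (auto split: Option.bind_split)

lemma exec_map0: "distinct ds \<Longrightarrow> exec \<beta> (map (Pair 0) ds) =
  (if \<forall>e\<in>set ds. \<beta> e = 0 then Some (\<lambda>e. if e \<in> set ds then 1 else \<beta> e) else None)"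
  by (induction ds arbitrary: \<beta>) (auto simp: stepc_def fun_eq_iff)

lemma exec_map1: "distinct ds \<Longrightarrow> exec \<beta> (map (Pair 1) ds) =
  (if \<forall>e\<in>set ds. \<beta> e = 1 then Some (\<lambda>e. if e \<in> set ds then 0 else \<beta> e) else None)"
  by (induction ds arbitrary: \<beta>) (auto simp: stepc_def fun_eq_iff)

definition Cpar :: "(nat, nat) cca" where
  "Cpar = \<lparr>cQ = {0}, cSigma = {0,1},
     cdelta = {(0, 0, (REq, 0), ResetTo, 1, 0), (0, 1, (REq, 1), ResetTo, 0, 0)},
     cq0 = 0, cF = {0}\<rparr>"

lemma Cpar_wf: "cca_wf Cpar"
  by (auto simp: cca_wf_def Cpar_def)

lemma cca_exec: "cca_run Cpar c w c' \<Longrightarrow> exec (snd c) w \<noteq> None"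
proof (induction rule: cca_run.induct)
  case (cca_nil c) then show ?case by simp
next
  case (cca_step q a r e ins m q' \<beta> d w cf)
  from cca_step(1) have "(a = 0 \<and> r = REq \<and> e = 0 \<and> ins = ResetTo \<and> m = 1) \<or> (a = 1 \<and> r = REq \<and> e = 1 \<and> ins = ResetTo \<and> m = 0)"
    by (auto simp: Cpar_def)
  then show ?case
  proof
    assume h: "a = 0 \<and> r = REq \<and> e = 0 \<and> ins = ResetTo \<and> m = 1"
    then have "\<beta> d = 0" "exec (\<beta>(d := 1)) w \<noteq> None" using cca_step(2,4) by (auto simp: fun_upd_def)
    then show ?thesis using h by (simp add: stepc_def)
  next
    assume h: "a = 1 \<and> r = REq \<and> e = 1 \<and> ins = ResetTo \<and> m = 0"
    then have "\<beta> d = 1" "exec (\<beta>(d := 0)) w \<noteq> None" using cca_step(2,4) by (auto simp: fun_upd_def)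
    then show ?thesis using h by (simp add: stepc_def)
  qed
qed

lemma exec_cca: "exec \<beta> w = Some \<beta>' \<Longrightarrow> cca_run Cpar (0, \<beta>) w (0, \<beta>')"
proof (induction w arbitrary: \<beta>)
  case Nil then show ?case by (auto intro: cca_nil)
next
  case (Cons x w)
  obtain a d where x: "x = (a,d)" by (cases x)
  show ?case
  proof (cases "a = 0 \<and> \<beta> d = 0")
    case True
    then have "exec (\<beta>(d := 1)) w = Some \<beta>'" using Cons.prems by (simp add: x stepc_def)
    from Cons.IH[OF this] have "cca_run Cpar (0, \<beta>(d := cca_apply ResetTo 1 (\<beta> d))) w (0, \<beta>')" by (simp only: cca_apply.simps)
    then have "cca_run Cpar (0, \<beta>) ((0,d) # w) (0, \<beta>')" using True
      by (intro cca_step[of 0 0 REq 0 ResetTo 1 0]) (auto simp: Cpar_def)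
    then show ?thesis unfolding x using True by simp
  next
    case False
    then have F: "a = 1 \<and> \<beta> d = 1" "exec (\<beta>(d := 0)) w = Some \<beta>'" using Cons.prems
      by (auto simp: x stepc_def split: if_splits)
    from Cons.IH[OF F(2)] have "cca_run Cpar (0, \<beta>(d := cca_apply ResetTo 0 (\<beta> d))) w (0, \<beta>')" by (simp only: cca_apply.simps)
    then have "cca_run Cpar (0, \<beta>) ((1,d) # w) (0, \<beta>')" using F(1)
      by (intro cca_step[of 0 1 REq 1 ResetTo 0 0]) (auto simp: Cpar_def)
    then show ?thesis unfolding x using F(1) by simp
  qed
qed


lemma safa_inv:
  "safa_run M c w c' \<Longrightarrow> safa_wf M \<Longrightarrow> fst c \<in> sQ M \<Longrightarrow> (\<forall>i\<ge>sm M. snd c i = {}) \<Longrightarrow>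
   (\<forall>i. snd c i \<subseteq> X) \<Longrightarrow> snd ` set w \<subseteq> X \<Longrightarrow>
   fst c' \<in> sQ M \<and> (\<forall>i\<ge>sm M. snd c' i = {}) \<and> (\<forall>i. snd c' i \<subseteq> X)"
proof (induction rule: safa_run.induct)
  case (safa_nil c) then show ?case by simp
next
  case (safa_step q a cc oo q' S d w cf)
  have t: "q' \<in> sQ M" "op_ok (sm M) oo" using wf_trans[OF safa_step.prems(1) safa_step.hyps(1)] by auto
  have "\<forall>i\<ge>sm M. safa_apply oo d S i = {}" using safa_step.prems(3) t(2)
    by (cases oo) (auto simp: op_ok_def)
  moreover have "\<forall>i. safa_apply oo d S i \<subseteq> X" using safa_step.prems(4,5)
    by (cases oo) auto
  ultimately show ?case using safa_step t by simp
qed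

lemma pump:
  assumes wf: "safa_wf M"
  shows "safa_run M (q,S) u (q',S) \<Longrightarrow> q \<in> sQ M \<Longrightarrow>
   (\<exists>x y z p. u = x@y@z \<and> y \<noteq> [] \<and> safa_run M (q,S) x (p,S) \<and> safa_run M (p,S) z (q',S)) \<or>
   (\<exists>qs. distinct qs \<and> length qs = Suc (length u) \<and> set qs \<subseteq> sQ M \<and>
      (\<forall>p\<in>set qs. \<exists>x z. u = x@z \<and> safa_run M (q,S) x (p,S) \<and> safa_run M (p,S) z (q',S)))"
proof (induction u arbitrary: q)
  case Nil
  then have "q' = q" by (simp add: safa_run_nil_iff)
  then show ?case using Nil by (intro disjI2 exI[of _ "[q]"]) (auto intro: safa_nil)
next
  case (Cons xx u)
  obtain a d where xx: "xx = (a,d)" by (cases xx)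
  from Cons.prems(1) obtain cc oo q1 where t: "(q,a,cc,oo,q1) \<in> sdelta M" "safa_holds cc S d"
    "safa_run M (q1, safa_apply oo d S) u (q',S)" unfolding xx by (auto simp: safa_run_cons_iff)
  have "safa_apply oo d S = S"
  proof
    fix i show "safa_apply oo d S i = S i"
      using safa_apply_mono[of S i oo d] safa_run_mono[OF t(3), of i] by auto
  qed
  with t have t3: "safa_run M (q1, S) u (q',S)" by simp
  have st: "safa_run M (q,S) ((a,d)#v) c" if "safa_run M (q1,S) v c" for v c
    using safa_step[OF t(1,2)] that \<open>safa_apply oo d S = S\<close> by simp
  have q1: "q1 \<in> sQ M" using wf_trans[OF wf t(1)] by auto
  from Cons.IH[OF t3 q1] show ?case
  proof
    assume "\<exists>x y z p. u = x@y@z \<and> y \<noteq> [] \<and> safa_run M (q1,S) x (p,S) \<and> safa_run M (p,S) z (q',S)"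
    then obtain x y z p where "u = x@y@z" "y \<noteq> []" "safa_run M (q1,S) x (p,S)" "safa_run M (p,S) z (q',S)"
      by blast
    then show ?case unfolding xx using st by (intro disjI1 exI[of _ "(a,d)#x"] exI[of _ y] exI[of _ z] exI[of _ p]) auto
  next
    assume "\<exists>qs. distinct qs \<and> length qs = Suc (length u) \<and> set qs \<subseteq> sQ M \<and>
      (\<forall>p\<in>set qs. \<exists>x z. u = x@z \<and> safa_run M (q1,S) x (p,S) \<and> safa_run M (p,S) z (q',S))"
    then obtain qs where qs: "distinct qs" "length qs = Suc (length u)" "set qs \<subseteq> sQ M"
      "\<forall>p\<in>set qs. \<exists>x z. u = x@z \<and> safa_run M (q1,S) x (p,S) \<and> safa_run M (p,S) z (q',S)" by blast
    show ?case
    proof (cases "q \<in> set qs")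
      case True
      with qs(4) obtain x z where "u = x@z" "safa_run M (q1,S) x (q,S)" "safa_run M (q,S) z (q',S)" by blast
      then show ?thesis unfolding xx using st
        by (intro disjI1 exI[of _ "[]"] exI[of _ "(a,d)#x"] exI[of _ z] exI[of _ q]) (auto intro: safa_nil)
    next
      case False
      have "\<forall>p\<in>set (q#qs). \<exists>x z. (a,d)#u = x@z \<and> safa_run M (q,S) x (p,S) \<and> safa_run M (p,S) z (q',S)"
      proof
        fix p assume "p \<in> set (q#qs)"
        then consider "p = q" | "p \<in> set qs" by auto
        then show "\<exists>x z. (a,d)#u = x@z \<and> safa_run M (q,S) x (p,S) \<and> safa_run M (p,S) z (q',S)"
        proof cases
          case 1 then show ?thesis using Cons.prems(1) unfolding xx
            by (intro exI[of _ "[]"] exI[of _ "(a,d)#u"]) (auto intro: safa_nil)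
        next
          case 2
          with qs(4) obtain x z where "u = x@z" "safa_run M (q1,S) x (p,S)" "safa_run M (p,S) z (q',S)" by blast
          then show ?thesis using st by (intro exI[of _ "(a,d)#x"] exI[of _ z]) auto
        qed
      qed
      then show ?thesis using qs False Cons.prems(2) unfolding xx
        by (intro disjI2 exI[of _ "q#qs"]) auto
    qed
  qed
qed

lemma pump2:
  assumes wf: "safa_wf M" and r: "safa_run M (q,S) u (q',S)" and q: "q \<in> sQ M"
    and len: "card (sQ M) \<le> length u"
  shows "\<exists>x y z p. u = x@y@z \<and> y \<noteq> [] \<and> safa_run M (q,S) x (p,S) \<and> safa_run M (p,S) z (q',S)"
proof -
  have fin: "finite (sQ M)" using wf by (simp add: safa_wf_def)
  { fix qs :: "'a list" assume "distinct qs" "length qs = Suc (length u)" "set qs \<subseteq> sQ M"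
    then have "Suc (length u) \<le> card (sQ M)" using card_mono[OF fin] distinct_card by metis
    with len have False by simp }
  then show ?thesis using pump[OF wf r q] by blast
qed

definition phi :: "nat \<Rightarrow> (nat \<Rightarrow> data set) \<Rightarrow> nat" where
  "phi m S = (\<Sum>i<m. card (S i))"

lemma phi_bound: "\<forall>i. S i \<subseteq> {..<n} \<Longrightarrow> phi m S \<le> m * n"
proof -
  assume h: "\<forall>i. S i \<subseteq> {..<n}"
  have "card (S i) \<le> n" for i using card_mono[OF _ h[rule_format, of i]] by simp
  then have "phi m S \<le> (\<Sum>i<m. n)" unfolding phi_def by (intro sum_mono) auto
  then show ?thesis by simp
qed

lemma phi_mono: "\<forall>i. S i \<subseteq> S' i \<Longrightarrow> \<forall>i. S' i \<subseteq> {..<n} \<Longrightarrow> phi m S \<le> phi m S'"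
proof -
  assume h: "\<forall>i. S i \<subseteq> S' i" "\<forall>i. S' i \<subseteq> {..<n}"
  have "finite (S' i)" for i using h(2) finite_subset[of "S' i" "{..<n}"] by auto
  then show ?thesis unfolding phi_def using h(1) by (intro sum_mono card_mono) auto
qed

lemma phi_strict: "\<forall>i. S i \<subseteq> S' i \<Longrightarrow> \<forall>i. S' i \<subseteq> {..<n} \<Longrightarrow> \<forall>i\<ge>m. S i = {} \<Longrightarrow> \<forall>i\<ge>m. S' i = {}
  \<Longrightarrow> S \<noteq> S' \<Longrightarrow> phi m S < phi m S'"
proof -
  assume h: "\<forall>i. S i \<subseteq> S' i" "\<forall>i. S' i \<subseteq> {..<n}" "\<forall>i\<ge>m. S i = {}" "\<forall>i\<ge>m. S' i = {}" "S \<noteq> S'"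
  from h(5) obtain i where i: "S i \<noteq> S' i" by (meson ext)
  have "i < m" using h(3,4) i by (metis not_le)
  have fin: "finite (S' j)" for j using h(2) finite_subset[of "S' j" "{..<n}"] by auto
  have "card (S i) < card (S' i)" using h(1) i fin[of i]
    by (intro psubset_card_mono) auto
  then show ?thesis unfolding phi_def using \<open>i < m\<close> h
    by (intro sum_strict_mono_ex1) (auto intro!: card_mono fin)
qed

lemma rounds:
  assumes wf: "safa_wf M" and sA: "snd ` set A \<subseteq> {..<n}" and sB: "snd ` set B \<subseteq> {..<n}"
  shows "safa_run M (q,S) (concat (replicate r (A@B)) @ T) cf \<Longrightarrow> q \<in> sQ M \<Longrightarrow>
    (\<forall>i\<ge>sm M. S i = {}) \<Longrightarrow> (\<forall>i. S i \<subseteq> {..<n}) \<Longrightarrow> sm M * n < phi (sm M) S + r \<Longrightarrow>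
    \<exists>j<r. \<exists>q1 S1 q2. safa_run M (q,S) (concat (replicate j (A@B))) (q1,S1) \<and> q1 \<in> sQ M \<and>
       safa_run M (q1,S1) A (q2,S1) \<and> safa_run M (q2,S1) (B @ concat (replicate (r - Suc j) (A@B)) @ T) cf"
proof (induction r arbitrary: q S)
  case 0
  then show ?case using phi_bound[of S n "sm M"] by simp
next
  case (Suc r)
  have "safa_run M (q,S) (A @ (B @ concat (replicate r (A@B)) @ T)) cf" using Suc.prems(1) by simp
  then obtain c2 where r1: "safa_run M (q,S) A c2" "safa_run M c2 (B @ concat (replicate r (A@B)) @ T) cf"
    using safa_run_appendD by blast
  obtain q2 S2 where c2: "c2 = (q2,S2)" by (cases c2)
  from r1(2) obtain c3 where r2: "safa_run M c2 B c3" "safa_run M c3 (concat (replicate r (A@B)) @ T) cf"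
    using safa_run_appendD by blast
  obtain q3 S3 where c3: "c3 = (q3,S3)" by (cases c3)
  have i2: "q2 \<in> sQ M" "\<forall>i\<ge>sm M. S2 i = {}" "\<forall>i. S2 i \<subseteq> {..<n}"
    using safa_inv[OF r1(1) wf, of "{..<n}"] Suc.prems sA unfolding c2 by auto
  have i3: "q3 \<in> sQ M" "\<forall>i\<ge>sm M. S3 i = {}" "\<forall>i. S3 i \<subseteq> {..<n}"
    using safa_inv[OF r2(1) wf, of "{..<n}"] i2 sB unfolding c2 c3 by auto
  have m2: "\<forall>i. S i \<subseteq> S2 i" using safa_run_mono[OF r1(1)] c2 by auto
  have m3: "\<forall>i. S2 i \<subseteq> S3 i" using safa_run_mono[OF r2(1)] c2 c3 by auto
  show ?case
  proof (cases "S2 = S")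
    case True
    then show ?thesis using r1 Suc.prems(2) unfolding c2
      by (intro exI[of _ 0]) (auto intro: safa_nil)
  next
    case False
    have "phi (sm M) S < phi (sm M) S2" using phi_strict[OF m2 i2(3) Suc.prems(3) i2(2)] False by auto
    also have "\<dots> \<le> phi (sm M) S3" using phi_mono[OF m3 i3(3)] .
    finally have "sm M * n < phi (sm M) S3 + r" using Suc.prems(5) by simp
    from Suc.IH[OF r2(2)[unfolded c3] i3(1) i3(2) i3(3) this]
    obtain j q1 S1 q2' where j: "j < r" "safa_run M (q3,S3) (concat (replicate j (A@B))) (q1,S1)" "q1 \<in> sQ M"
       "safa_run M (q1,S1) A (q2',S1)" "safa_run M (q2',S1) (B @ concat (replicate (r - Suc j) (A@B)) @ T) cf"
      by blast
    have "safa_run M (q,S) (A @ B @ concat (replicate j (A@B))) (q1,S1)"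
      using safa_run_trans[OF r1(1) safa_run_trans[OF r2(1) j(2)[folded c3]]] .
    then show ?thesis using j by (intro exI[of _ "Suc j"]) auto
  qed
qed


lemma part2: "\<forall>M :: (nat,nat) safa. safa_wf M \<longrightarrow> safa_lang M \<noteq> cca_lang Cpar"
proof (intro allI impI notI)
  fix M :: "(nat,nat) safa"
  assume wf: "safa_wf M" and eq: "safa_lang M = cca_lang Cpar"
  define n where "n = Suc (card (sQ M))"
  define K where "K = Suc (sm M * n)"
  define A where "A = map (Pair (0::nat)) [0..<n]"
  define B where "B = map (Pair (1::nat)) [0..<n]"
  define \<beta>0 where "\<beta>0 = (\<lambda>_::nat. 0::nat)"
  have eAB: "exec \<beta>0 (A@B) = Some \<beta>0"
  proof -
    define \<beta>1 where "\<beta>1 = (\<lambda>e. if e \<in> set [0..<n] then 1 else \<beta>0 e)"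
    have e1: "exec \<beta>0 A = Some \<beta>1" unfolding A_def \<beta>1_def using exec_map0[of "[0..<n]" \<beta>0] by (simp add: \<beta>0_def)
    have "exec \<beta>1 B = Some (\<lambda>e. if e \<in> set [0..<n] then 0 else \<beta>1 e)"
      unfolding B_def using exec_map1[of "[0..<n]" \<beta>1] by (simp add: \<beta>1_def)
    also have "(\<lambda>e. if e \<in> set [0..<n] then 0 else \<beta>1 e) = \<beta>0" by (auto simp: \<beta>1_def \<beta>0_def)
    finally show ?thesis using e1 by (simp add: exec_append)
  qed
  have eR: "exec \<beta>0 (concat (replicate r (A@B))) = Some \<beta>0" for r
  proof (induction r)
    case (Suc r)
    have "exec \<beta>0 ((A@B) @ concat (replicate r (A@B))) = Some \<beta>0"
      by (subst exec_append) (simp add: eAB Suc.IH)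
    then show ?case by simp
  qed simp
  have "cca_run Cpar (0,\<beta>0) (concat (replicate K (A@B))) (0,\<beta>0)" by (rule exec_cca[OF eR])
  then have "concat (replicate K (A@B)) \<in> cca_lang Cpar"
    unfolding cca_lang_def \<beta>0_def by (auto simp: Cpar_def)
  with eq have "concat (replicate K (A@B)) \<in> safa_lang M" by simp
  then obtain qf Sf where run0: "safa_run M (sq0 M, \<lambda>_. {}) (concat (replicate K (A@B))) (qf,Sf)"
    "qf \<in> sF M" unfolding safa_lang_def by auto
  then have run: "safa_run M (sq0 M, \<lambda>_. {}) (concat (replicate K (A@B)) @ []) (qf,Sf)" "qf \<in> sF M" by auto
  have sA: "snd ` set A \<subseteq> {..<n}" and sB: "snd ` set B \<subseteq> {..<n}" unfolding A_def B_def by auto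
  have q0: "sq0 M \<in> sQ M" using wf by (simp add: safa_wf_def)
  have "sm M * n < phi (sm M) (\<lambda>_. {}) + K" by (simp add: phi_def K_def)
  from rounds[OF wf sA sB run(1) q0 _ _ this]
  obtain j q1 S1 q2 where j: "j < K" "safa_run M (sq0 M, \<lambda>_. {}) (concat (replicate j (A@B))) (q1,S1)"
    "q1 \<in> sQ M" "safa_run M (q1,S1) A (q2,S1)"
    "safa_run M (q2,S1) (B @ concat (replicate (K - Suc j) (A@B)) @ []) (qf,Sf)" by auto
  have "card (sQ M) \<le> length A" by (simp add: A_def n_def)
  from pump2[OF wf j(4) j(3) this] obtain x y z p where p: "A = x@y@z" "y \<noteq> []"
    "safa_run M (q1,S1) x (p,S1)" "safa_run M (p,S1) z (q2,S1)" by blast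
  define R where "R = B @ concat (replicate (K - Suc j) (A@B)) @ []"
  define W' where "W' = concat (replicate j (A@B)) @ (x @ (z @ R))"
  have "safa_run M (sq0 M, \<lambda>_. {}) W' (qf,Sf)"
    unfolding W'_def R_def
    by (intro safa_run_trans[OF j(2)] safa_run_trans[OF p(3)] safa_run_trans[OF p(4)] j(5))
  then have "W' \<in> cca_lang Cpar" using eq run(2) unfolding safa_lang_def by auto
  then obtain c where "cca_run Cpar (0, \<beta>0) W' c" unfolding cca_lang_def \<beta>0_def by (auto simp: Cpar_def)
  from cca_exec[OF this] have ne: "exec \<beta>0 W' \<noteq> None" by simp
  from p(1) obtain xs ys zs where xs: "[0..<n] = xs @ ys @ zs" "x = map (Pair 0) xs"
    "y = map (Pair 0) ys" "z = map (Pair 0) zs"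
  proof -
    from p(1) obtain us vs where u: "[0..<n] = us @ vs" "x = map (Pair 0) us" "y @ z = map (Pair 0) vs"
      unfolding A_def by (auto simp: map_eq_append_conv)
    from u(3)[symmetric] obtain ys zs where "vs = ys @ zs" "y = map (Pair 0) ys" "z = map (Pair 0) zs"
      by (auto simp: map_eq_append_conv)
    with u that show thesis by blast
  qed
  from p(2) xs(3) obtain d where d: "d \<in> set ys" by (cases ys) auto
  have dist: "distinct (xs @ ys @ zs)" using xs(1) by (metis distinct_upt)
  then have dn: "d \<notin> set (xs @ zs)" and dxz: "distinct (xs @ zs)" using d by auto
  have dlt: "d \<in> set [0..<n]" using xs(1) d by simp
  have exz: "exec \<beta>0 (x @ z) = Some (\<lambda>e. if e \<in> set (xs@zs) then 1 else \<beta>0 e)"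
    using exec_map0[OF dxz, of \<beta>0] xs(2,4) by (simp add: \<beta>0_def)
  have "exec (\<lambda>e. if e \<in> set (xs@zs) then 1 else \<beta>0 e) B = None"
    unfolding B_def using exec_map1[of "[0..<n]"] dn dlt by (auto simp: \<beta>0_def)
  then have eB: "exec (\<lambda>e. if e \<in> set (xs@zs) then 1 else \<beta>0 e) R = None"
    unfolding R_def exec_append[of _ B] by simp
  have "W' = concat (replicate j (A@B)) @ ((x @ z) @ R)" by (simp add: W'_def)
  then have "exec \<beta>0 W' = None"
    using exec_append[of \<beta>0 "concat (replicate j (A@B))" "(x @ z) @ R"]
      exec_append[of \<beta>0 "x @ z" "R"] eR[of j] exz eB by simp
  with ne show False by simp
qed

theorem theorem17:
  shows "(\<forall>M :: ('q, 'a) safa. safa_wf M \<longrightarrow>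
            (\<exists>C :: (nat, 'a) cca. cca_wf C \<and> cca_lang C = safa_lang M))
       \<and> (\<exists>C :: (nat, nat) cca. cca_wf C \<and>
            (\<forall>M :: (nat, nat) safa. safa_wf M \<longrightarrow> safa_lang M \<noteq> cca_lang C))"
  using part1 part2 Cpar_wf by blast

end
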